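(* Let $\tau$ be a finite topology on a finite set $X$. Then there exists a finite topology $\tau'$ on $X$ such that $G_2(\tau)\cong G_2(\tau')$ and the height of $\tau'$ is at most $2$.
   Context: A finite topology on $X$ is a family of subsets (open sets) containing $\emptyset,X$ and closed under unions and intersections. $m_\tau(x)$ is the intersection of all open sets containing $x$. The height of $\tau$ is the largest $h$ such that there are distinct $v_1,\dots,v_h\in X$ with $m_\tau(v_1)\subseteq m_\tau(v_2)\subseteq\cdots\subseteq m_\tau(v_h)$. $G_2(\tau)$ is the simple graph on $X$ in which distinct $x,y$ are adjacent iff there do not exist disjoint open sets $U_x\ni x$, $U_y\ni y$. *)

theory Defs
  imports Main
begin

definition finite_topology :: "'a set \<Rightarrow> 'a set set \<Rightarrow> bool" where
  "finite_topology X T \<longleftrightarrow> finite X \<and> T \<subseteq> Pow X \<and> {} \<in> T \<and> X \<in> T \<and>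
     (\<forall>U\<in>T. \<forall>V\<in>T. U \<union> V \<in> T) \<and> (\<forall>U\<in>T. \<forall>V\<in>T. U \<inter> V \<in> T)"

definition min_open :: "'a set set \<Rightarrow> 'a \<Rightarrow> 'a set" where
  "min_open T x = \<Inter> {U \<in> T. x \<in> U}"

definition topo_height :: "'a set \<Rightarrow> 'a set set \<Rightarrow> nat" where
  "topo_height X T = Max {h. \<exists>v :: nat \<Rightarrow> 'a. inj_on v {..<h} \<and> (\<forall>i<h. v i \<in> X) \<and>
       (\<forall>i. Suc i < h \<longrightarrow> min_open T (v i) \<subseteq> min_open T (v (Suc i)))}"

definition G2_adj :: "'a set \<Rightarrow> 'a set set \<Rightarrow> 'a \<Rightarrow> 'a \<Rightarrow> bool" where
  "G2_adj X T x y \<longleftrightarrow> x \<in> X \<and> y \<in> X \<and> x \<noteq> y \<and>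
     \<not> (\<exists>U\<in>T. \<exists>V\<in>T. x \<in> U \<and> y \<in> V \<and> U \<inter> V = {})"

definition G2_iso :: "'a set \<Rightarrow> 'a set set \<Rightarrow> 'a set set \<Rightarrow> bool" where
  "G2_iso X T T' \<longleftrightarrow> (\<exists>f. bij_betw f X X \<and>
     (\<forall>x\<in>X. \<forall>y\<in>X. G2_adj X T x y \<longleftrightarrow> G2_adj X T' (f x) (f y)))"

end

theory Submission
  imports Defs
begin

lemma inter_closed:
  assumes "finite F" "F \<noteq> {}" "F \<subseteq> T" "\<forall>U\<in>T. \<forall>V\<in>T. U \<inter> V \<in> T"
  shows "\<Inter>F \<in> T"
  using assms by (induction F rule: finite_ne_induct) auto

lemma mo:
  assumes "finite_topology X T" "x \<in> X"
  shows "min_open T x \<in> T \<and> x \<in> min_open T x \<and> min_open T x \<subseteq> X"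
proof -
  have ft: "T \<subseteq> Pow X" "X \<in> T" "\<forall>U\<in>T. \<forall>V\<in>T. U \<inter> V \<in> T" "finite X"
    using assms(1) unfolding finite_topology_def by blast+
  have fT: "finite T" using ft(1,4) finite_subset finite_Pow_iff by blast
  have X: "X \<in> {U \<in> T. x \<in> U}" using ft(2) assms(2) by blast
  have "\<Inter>{U \<in> T. x \<in> U} \<in> T"
  proof (rule inter_closed)
    show "finite {U \<in> T. x \<in> U}" using fT by simp
    show "{U \<in> T. x \<in> U} \<noteq> {}" using X by blast
    show "{U \<in> T. x \<in> U} \<subseteq> T" by blast
  qed (rule ft(3))
  moreover note X
  moreover have "x \<in> \<Inter>{U \<in> T. x \<in> U}" by blast
  moreover have "\<Inter>{U \<in> T. x \<in> U} \<subseteq> X" using calculation(2) by (rule Inter_lower)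
  ultimately show ?thesis unfolding min_open_def by blast
qed

lemma mo_sub:
  assumes "U \<in> T" "x \<in> U"
  shows "min_open T x \<subseteq> U"
  using assms unfolding min_open_def by auto

lemma mo_trans:
  assumes "finite_topology X T" "x \<in> X" "y \<in> min_open T x"
  shows "min_open T y \<subseteq> min_open T x"
proof -
  have "min_open T x \<in> T" using mo[OF assms(1,2)] by (rule conjunct1)
  then show ?thesis using assms(3) by (rule mo_sub)
qed

lemma adj:
  assumes "finite_topology X T"
  shows "G2_adj X T x y \<longleftrightarrow> x\<in>X \<and> y\<in>X \<and> x\<noteq>y \<and> min_open T x \<inter> min_open T y \<noteq> {}"
proof
  assume a: "G2_adj X T x y"
  then have "x \<in> X" "y \<in> X" "x \<noteq> y" unfolding G2_adj_def by auto
  moreover have "min_open T x \<inter> min_open T y \<noteq> {}"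
    using a mo[OF assms \<open>x\<in>X\<close>] mo[OF assms \<open>y\<in>X\<close>] unfolding G2_adj_def by blast
  ultimately show "x\<in>X \<and> y\<in>X \<and> x\<noteq>y \<and> min_open T x \<inter> min_open T y \<noteq> {}" by blast
next
  assume a: "x\<in>X \<and> y\<in>X \<and> x\<noteq>y \<and> min_open T x \<inter> min_open T y \<noteq> {}"
  show "G2_adj X T x y" unfolding G2_adj_def
  proof (intro conjI)
    show "\<not> (\<exists>U\<in>T. \<exists>V\<in>T. x \<in> U \<and> y \<in> V \<and> U \<inter> V = {})"
    proof
      assume "\<exists>U\<in>T. \<exists>V\<in>T. x \<in> U \<and> y \<in> V \<and> U \<inter> V = {}"
      then obtain U V where "U\<in>T" "V\<in>T" "x \<in> U" "y \<in> V" "U \<inter> V = {}" by blast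
      then show False using mo_sub[of U T x] mo_sub[of V T y] a by blast
    qed
  qed (use a in auto)
qed

lemma constr:
  assumes "finite X" "\<forall>x\<in>X. x \<in> M x \<and> M x \<subseteq> X" "\<forall>x\<in>X. \<forall>y\<in>M x. M y \<subseteq> M x"
  defines "T' \<equiv> {U. U\<subseteq>X \<and> (\<forall>x\<in>U. M x \<subseteq> U)}"
  shows "finite_topology X T' \<and> (\<forall>x\<in>X. min_open T' x = M x)"
proof
  show "finite_topology X T'" unfolding finite_topology_def T'_def using assms(1,2) by auto
  show "\<forall>x\<in>X. min_open T' x = M x"
  proof
    fix x assume x: "x \<in> X"
    have "M x \<in> T'" unfolding T'_def using assms(2,3) x by blast
    then have "min_open T' x \<subseteq> M x" using mo_sub assms(2) x by metis
    moreover have "M x \<subseteq> min_open T' x" unfolding min_open_def T'_def by auto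
    ultimately show "min_open T' x = M x" by blast
  qed
qed

lemma height:
  assumes "finite X"
    "\<And>a b c. a\<in>X \<Longrightarrow> b\<in>X \<Longrightarrow> c\<in>X \<Longrightarrow> a\<noteq>b \<Longrightarrow> b\<noteq>c \<Longrightarrow> a\<noteq>c \<Longrightarrow>
       min_open T a \<subseteq> min_open T b \<Longrightarrow> min_open T b \<subseteq> min_open T c \<Longrightarrow> False"
  shows "topo_height X T \<le> 2"
proof -
  let ?S = "{h. \<exists>v :: nat \<Rightarrow> 'a. inj_on v {..<h} \<and> (\<forall>i<h. v i \<in> X) \<and>
       (\<forall>i. Suc i < h \<longrightarrow> min_open T (v i) \<subseteq> min_open T (v (Suc i)))}"
  have sub: "?S \<subseteq> {..2}"
  proof
    fix h assume "h \<in> ?S"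
    then obtain v where v: "inj_on v {..<h}" "\<forall>i<h. v i \<in> X"
      "\<forall>i. Suc i < h \<longrightarrow> min_open T (v i) \<subseteq> min_open T (v (Suc i))" by blast
    show "h \<in> {..2}"
    proof (rule ccontr)
      assume "h \<notin> {..2}"
      then have h: "3 \<le> h" by auto
      have d: "v 0 \<noteq> v 1" "v 1 \<noteq> v 2" "v 0 \<noteq> v 2"
        using inj_onD[OF v(1), of 0 1] inj_onD[OF v(1), of 1 2] inj_onD[OF v(1), of 0 2] h by auto
      show False
      proof (rule assms(2)[of "v 0" "v 1" "v 2"])
        show "v 0 \<in> X" "v 1 \<in> X" "v 2 \<in> X" using v(2) h by auto
        show "min_open T (v 0) \<subseteq> min_open T (v 1)" using v(3)[rule_format, of 0] h by simp
        show "min_open T (v 1) \<subseteq> min_open T (v 2)" using v(3)[rule_format, of 1] h by (simp add: numeral_2_eq_2)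
        show "v 0 \<noteq> v 1" "v 1 \<noteq> v 2" "v 0 \<noteq> v 2" by (rule d)+
      qed
    qed
  qed
  have ne: "?S \<noteq> {}"
  proof -
    have "0 \<in> ?S" by simp
    then show ?thesis by (metis empty_iff)
  qed
  have fin: "finite ?S" by (rule finite_subset[OF sub]) simp
  have "Max ?S \<le> 2" unfolding Max_le_iff[OF fin ne] using sub by (simp add: subset_iff)
  then show ?thesis unfolding topo_height_def .
qed

theorem lemma3p5:
  fixes X :: "'a set" and T :: "'a set set"
  assumes "finite X" and "finite_topology X T"
  shows "\<exists>T'. finite_topology X T' \<and> G2_iso X T T' \<and> topo_height X T' \<le> 2"
proof -
  let ?m = "min_open T"
  note tp = assms(2)
  obtain g :: "'a \<Rightarrow> nat" and n where g: "g ` X = {i. i < n}" "inj_on g X"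
    using finite_imp_inj_to_nat_seg[OF assms(1)] by blast
  define R where "R = {r\<in>X. \<forall>w\<in>?m r. ?m w = ?m r \<and> g r \<le> g w}"
  have mX: "\<And>x. x \<in> X \<Longrightarrow> ?m x \<subseteq> X" using mo[OF tp] by blast
  have mx: "\<And>x. x \<in> X \<Longrightarrow> x \<in> ?m x" using mo[OF tp] by blast
  have mt: "\<And>x y. x \<in> X \<Longrightarrow> y \<in> ?m x \<Longrightarrow> ?m y \<subseteq> ?m x" using mo_trans[OF tp] by blast
  have fm: "\<And>x. x \<in> X \<Longrightarrow> finite (?m x)" using mX assms(1) finite_subset by blast
  have Rsing: "\<And>r. r \<in> R \<Longrightarrow> ?m r \<inter> R = {r}"
  proof -
    fix r assume r: "r \<in> R"
    have rR: "r \<in> X" "\<forall>u\<in>?m r. ?m u = ?m r \<and> g r \<le> g u" using r unfolding R_def by auto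
    have "w = r" if w: "w \<in> ?m r" "w \<in> R" for w
    proof -
      have wR: "w \<in> X" "\<forall>u\<in>?m w. ?m u = ?m w \<and> g w \<le> g u" using w(2) unfolding R_def by auto
      have e: "?m w = ?m r" "g r \<le> g w" using rR(2) w(1) by auto
      have "r \<in> ?m w" using e(1) mx rR(1) by auto
      then have "g w \<le> g r" using wR(2) by auto
      then have "g w = g r" using e(2) by linarith
      then show "w = r" using g(2) wR(1) rR(1) unfolding inj_on_def by blast
    qed
    then show "?m r \<inter> R = {r}" using r mx rR(1) by auto
  qed
  have Rex: "\<And>z. z \<in> X \<Longrightarrow> \<exists>r\<in>R. r \<in> ?m z"
  proof -
    fix z assume z: "z \<in> X"
    obtain w where w: "w \<in> ?m z" "\<forall>v. v \<in> ?m z \<longrightarrow> card (?m w) \<le> card (?m v)"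
      using ex_has_least_nat[of "\<lambda>v. v \<in> ?m z" z "\<lambda>v. card (?m v)"] mx[OF z] by blast
    have wX: "w \<in> X" using w(1) mX z by blast
    have wz: "?m w \<subseteq> ?m z" using mt z w(1) by blast
    have eq: "?m v = ?m w" if "v \<in> ?m w" for v
    proof -
      have "?m v \<subseteq> ?m w" using mt wX that by blast
      moreover have "card (?m w) \<le> card (?m v)" using w(2) wz that by blast
      ultimately show ?thesis using card_seteq[OF fm[OF wX]] by blast
    qed
    obtain r where r: "r \<in> ?m w" "\<forall>u. u \<in> ?m w \<longrightarrow> g r \<le> g u"
      using ex_has_least_nat[of "\<lambda>v. v \<in> ?m w" w g] mx[OF wX] by blast
    have rX: "r \<in> X" using r(1) mX wX by blast
    have "\<forall>u\<in>?m r. ?m u = ?m r \<and> g r \<le> g u"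
    proof
      fix u assume u: "u \<in> ?m r"
      have "?m r = ?m w" using eq r(1) by blast
      then have "u \<in> ?m w" using u by blast
      then show "?m u = ?m r \<and> g r \<le> g u" using eq r(2) \<open>?m r = ?m w\<close> by metis
    qed
    then have "r \<in> R" unfolding R_def using rX by blast
    then show "\<exists>r\<in>R. r \<in> ?m z" using r(1) wz by blast
  qed
  define M where "M x = insert x (?m x \<inter> R)" for x
  have M1: "\<forall>x\<in>X. x \<in> M x \<and> M x \<subseteq> X" unfolding M_def using mX by auto
  have M2: "\<forall>x\<in>X. \<forall>y\<in>M x. M y \<subseteq> M x"
  proof (intro ballI)
    fix x y assume x: "x \<in> X" and y: "y \<in> M x"
    show "M y \<subseteq> M x"
    proof (cases "y = x")
      case False
      then have "y \<in> R" "y \<in> ?m x" using y unfolding M_def by auto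
      then have "M y = {y}" using Rsing unfolding M_def by auto
      then show ?thesis using y by auto
    qed simp
  qed
  define T' where "T' = {U. U\<subseteq>X \<and> (\<forall>x\<in>U. M x \<subseteq> U)}"
  have c: "finite_topology X T' \<and> (\<forall>x\<in>X. min_open T' x = M x)"
    using constr[OF assms(1) M1 M2] unfolding T'_def by blast
  have iso: "G2_iso X T T'"
    unfolding G2_iso_def
  proof (intro exI conjI ballI)
    show "bij_betw id X X" by simp
    fix x y assume x: "x \<in> X" and y: "y \<in> X"
    have "?m x \<inter> ?m y \<noteq> {} \<longleftrightarrow> M x \<inter> M y \<noteq> {}" if xy: "x \<noteq> y"
    proof
      assume "?m x \<inter> ?m y \<noteq> {}"
      then obtain z where z: "z \<in> ?m x" "z \<in> ?m y" by blast
      then have zX: "z \<in> X" using mX x by blast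
      obtain r where "r \<in> R" "r \<in> ?m z" using Rex[OF zX] by blast
      then have "r \<in> M x" "r \<in> M y" using mt x y z unfolding M_def by blast+
      then show "M x \<inter> M y \<noteq> {}" by blast
    next
      assume "M x \<inter> M y \<noteq> {}"
      then obtain z where z: "z \<in> M x" "z \<in> M y" by blast
      show "?m x \<inter> ?m y \<noteq> {}"
      proof (cases "z = x \<or> z = y")
        case True
        then show ?thesis
        proof
          assume "z = x"
          then have "x \<in> ?m y" using z(2) xy unfolding M_def by blast
          then show ?thesis using mx[OF x] by blast
        next
          assume "z = y"
          then have "y \<in> ?m x" using z(1) xy unfolding M_def by blast
          then show ?thesis using mx[OF y] by blast
        qed
      next
        case False
        then have "z \<in> ?m x" "z \<in> ?m y" using z unfolding M_def by blast+
        then show ?thesis by blast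
      qed
    qed
    moreover have "G2_adj X T' x y \<longleftrightarrow> x\<in>X \<and> y\<in>X \<and> x\<noteq>y \<and> M x \<inter> M y \<noteq> {}"
      using adj[of X T' x y] c x y by simp
    ultimately show "G2_adj X T x y = G2_adj X T' (id x) (id y)"
      using adj[OF tp, of x y] by (simp only: id_apply) blast
  qed
  have "topo_height X T' \<le> 2"
  proof (rule height[OF assms(1)])
    fix a b c' assume abc: "a\<in>X" "b\<in>X" "c'\<in>X" "a\<noteq>b" "b\<noteq>c'" "a\<noteq>c'"
      "min_open T' a \<subseteq> min_open T' b" "min_open T' b \<subseteq> min_open T' c'"
    then have s: "M a \<subseteq> M b" "M b \<subseteq> M c'" using c by auto
    have "a \<in> M b" using s M1 abc by blast
    then have "a \<in> R" "a \<in> ?m b" using abc unfolding M_def by auto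
    have "b \<in> M c'" using s M1 abc by blast
    then have "b \<in> R" using abc unfolding M_def by auto
    then have "M b = {b}" using Rsing unfolding M_def by auto
    then show False using \<open>a \<in> M b\<close> abc by auto
  qed
  then show ?thesis using c iso by blast
qed

end
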